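(* Let $\alpha\ge 1$. Suppose that every canonical instance admits an $\alpha$-WMMS allocation. Then every chore-allocation instance (with positive weights and nonnegative additive cost functions) admits a $4\alpha$-WMMS allocation.
   Context: A chore-allocation instance consists of a set $\mathcal N=\{a_1,\dots,a_n\}$ of agents, a finite set $\mathcal M=\{e_1,\dots,e_m\}$ of indivisible items (chores), positive weights $w_1,\dots,w_n$, and additive cost functions $v_i:2^{\mathcal M}\to\mathbb R_{\ge 0}$, i.e. $v_i(S)=\sum_{e\in S}v_i(e)$. An allocation is an ordered partition $(A_1,\dots,A_n)$ of $\mathcal M$ (bundles may be empty); $\mathcal A$ denotes the set of all allocations. The weighted maximin share of agent $a_i$ is $\mathsf{WMMS}_i=w_i\cdot\min_{(A_1,\dots,A_n)\in\mathcal A}\max_{j\in[n]}\frac{v_i(A_j)}{w_j}$. For $\alpha\ge1$, an allocation $(A_1,\dots,A_n)$ is $\alpha$-WMMS if $v_i(A_i)\le\alpha\cdot\mathsf{WMMS}_i$ for every agent $a_i$. An instance is canonical if: (i) agents are indexed so that $w_1\ge w_2\ge\cdots\ge w_n$, $\sum_i w_i=1$, and every $w_i=w_1/2^p$ for some nonnegative integer $p$; (ii) $v_i(\mathcal M)=1$ for every agent, and for every agent $a_i$ and item $e$, $v_i(e)$ is either $0$ or equal to $w_1/2^p$ for some nonnegative integer $p$; (iii) (identical ordering) $v_i(e_1)\ge v_i(e_2)\ge\cdots\ge v_i(e_m)$ for every agent $a_i$; (iv) $\mathsf{WMMS}_i=w_i$ for every agent $a_i$. *)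

theory Defs
  imports Complex_Main "HOL-Library.Disjoint_Sets"
begin

text \<open>Agents are a_1..a_n, represented by indices 0..<n (a_{i+1} is index i);
  items e_1..e_m are represented by indices 0..<m. Weights w :: nat => real,
  costs v i e = v_i(e_{e+1}).\<close>

definition chore_instance :: "nat \<Rightarrow> nat \<Rightarrow> (nat \<Rightarrow> real) \<Rightarrow> (nat \<Rightarrow> nat \<Rightarrow> real) \<Rightarrow> bool" where
  "chore_instance n m w v \<longleftrightarrow> n \<ge> 1 \<and> (\<forall>i<n. w i > 0) \<and> (\<forall>i<n. \<forall>e<m. v i e \<ge> 0)"

definition cost :: "(nat \<Rightarrow> nat \<Rightarrow> real) \<Rightarrow> nat \<Rightarrow> nat set \<Rightarrow> real" where
  "cost v i S = (\<Sum>e\<in>S. v i e)"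

text \<open>An allocation is an ordered partition (A_0,...,A_{n-1}) of the items {0..<m}
  (bundles may be empty); bundles of non-agents are fixed to be empty.\<close>
definition allocation :: "nat \<Rightarrow> nat \<Rightarrow> (nat \<Rightarrow> nat set) \<Rightarrow> bool" where
  "allocation n m A \<longleftrightarrow> (\<forall>j<n. A j \<subseteq> {..<m}) \<and> (\<Union>j<n. A j) = {..<m}
     \<and> disjoint_family_on A {..<n} \<and> (\<forall>j\<ge>n. A j = {})"

definition allocations :: "nat \<Rightarrow> nat \<Rightarrow> (nat \<Rightarrow> nat set) set" where
  "allocations n m = {A. allocation n m A}"

definition wmms :: "nat \<Rightarrow> nat \<Rightarrow> (nat \<Rightarrow> real) \<Rightarrow> (nat \<Rightarrow> nat \<Rightarrow> real) \<Rightarrow> nat \<Rightarrow> real" where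
  "wmms n m w v i = w i * Min ((\<lambda>A. Max ((\<lambda>j. cost v i (A j) / w j) ` {..<n})) ` allocations n m)"

definition is_alpha_wmms :: "nat \<Rightarrow> nat \<Rightarrow> (nat \<Rightarrow> real) \<Rightarrow> (nat \<Rightarrow> nat \<Rightarrow> real) \<Rightarrow> real \<Rightarrow> (nat \<Rightarrow> nat set) \<Rightarrow> bool" where
  "is_alpha_wmms n m w v \<alpha> A \<longleftrightarrow> allocation n m A \<and> (\<forall>i<n. cost v i (A i) \<le> \<alpha> * wmms n m w v i)"

definition canonical :: "nat \<Rightarrow> nat \<Rightarrow> (nat \<Rightarrow> real) \<Rightarrow> (nat \<Rightarrow> nat \<Rightarrow> real) \<Rightarrow> bool" where
  "canonical n m w v \<longleftrightarrow> chore_instance n m w v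
     \<and> (\<forall>i j. i \<le> j \<and> j < n \<longrightarrow> w j \<le> w i)
     \<and> (\<Sum>i<n. w i) = 1
     \<and> (\<forall>i<n. \<exists>p::nat. w i = w 0 / 2 ^ p)
     \<and> (\<forall>i<n. cost v i {..<m} = 1)
     \<and> (\<forall>i<n. \<forall>e<m. v i e = 0 \<or> (\<exists>p::nat. v i e = w 0 / 2 ^ p))
     \<and> (\<forall>i<n. \<forall>e e'. e \<le> e' \<and> e' < m \<longrightarrow> v i e' \<le> v i e)
     \<and> (\<forall>i<n. wmms n m w v i = w i)"

end

theory Submission
  imports Defs
begin

lemma alloc_sum:
  assumes "allocation n m A"
  shows "(\<Sum>j<n. cost v i (A j)) = cost v i {..<m}"
proof -
  have "cost v i {..<m} = sum (v i) (\<Union>j<n. A j)"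
    using assms unfolding allocation_def cost_def by simp
  also have "\<dots> = (\<Sum>j<n. sum (v i) (A j))"
    apply (rule sum.UNION_disjoint_family)
    using assms unfolding allocation_def by (auto intro: finite_subset)
  finally show ?thesis unfolding cost_def by simp
qed

lemma finite_allocations: "finite (allocations n m)"
proof -
  have "allocations n m \<subseteq> (\<lambda>f j. if j<n then f j else {}) ` (Pi\<^sub>E {..<n} (\<lambda>_. Pow {..<m}))"
  proof
    fix A assume "A \<in> allocations n m"
    hence a: "allocation n m A" by (simp add: allocations_def)
    have "A = (\<lambda>j. if j<n then restrict A {..<n} j else {})"
      using a unfolding allocation_def by (auto simp: fun_eq_iff)
    moreover have "restrict A {..<n} \<in> Pi\<^sub>E {..<n} (\<lambda>_. Pow {..<m})"
      using a unfolding allocation_def by auto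
    ultimately show "A \<in> (\<lambda>f j. if j<n then f j else {}) ` (Pi\<^sub>E {..<n} (\<lambda>_. Pow {..<m}))"
      by blast
  qed
  moreover have "finite (Pi\<^sub>E {..<n} (\<lambda>_. Pow {..<m}))" by (rule finite_PiE) auto
  ultimately show ?thesis by (meson finite_imageI finite_subset)
qed

lemma func_alloc:
  assumes "\<forall>e<m. f e < n"
  shows "allocation n m (\<lambda>j. if j<n then {e. e<m \<and> f e = j} else {})"
  using assms unfolding allocation_def disjoint_family_on_def by auto

lemma alloc_exists: "n \<ge> 1 \<Longrightarrow> allocation n m (\<lambda>j. if j<n then {e. e<m \<and> (0::nat) = j} else {})"
  by (rule func_alloc) auto

lemma allocations_ne: "n \<ge> 1 \<Longrightarrow> allocations n m \<noteq> {}"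
  using alloc_exists unfolding allocations_def by blast

lemma exact_wmms:
  assumes n: "n \<ge> 1" and W: "\<forall>l<n. W l > 0" and Q: "allocation n M Q"
    and ex: "\<forall>l<n. cost V k (Q l) = W l"
  shows "wmms n M W V k = W k"
proof -
  let ?F = "(\<lambda>A. Max ((\<lambda>j. cost V k (A j) / W j) ` {..<n}))"
  have "Min (?F ` allocations n M) = 1"
  proof (rule Min_eqI)
    show "finite (?F ` allocations n M)" using finite_allocations by simp
  next
    fix y assume "y \<in> ?F ` allocations n M"
    then obtain A where A: "allocation n M A" and y: "y = ?F A" by (auto simp: allocations_def)
    show "1 \<le> y"
    proof (rule ccontr)
      assume "\<not> 1 \<le> y"
      hence "\<forall>j<n. cost V k (A j) / W j < 1" using y n
        by (metis (no_types, lifting) Max_ge finite_imageI finite_lessThan image_eqI lessThan_iff linorder_not_le order_less_le_trans)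
      hence lt: "\<forall>j<n. cost V k (A j) < W j" using W by (simp add: divide_less_eq)
      have "(\<Sum>j<n. cost V k (A j)) < (\<Sum>j<n. W j)"
        apply (rule sum_strict_mono) using lt n by (auto simp: lessThan_empty_iff)
      also have "\<dots> = (\<Sum>j<n. cost V k (Q j))" using ex by simp
      also have "\<dots> = cost V k {..<M}" using alloc_sum[OF Q] .
      also have "\<dots> = (\<Sum>j<n. cost V k (A j))" using alloc_sum[OF A] by simp
      finally show False by simp
    qed
  next
    have "(\<lambda>j. cost V k (Q j) / W j) ` {..<n} = {1}" using ex W n by force
    hence "?F Q = 1" by simp
    thus "1 \<in> ?F ` allocations n M" using Q unfolding allocations_def by force
  qed
  thus ?thesis unfolding wmms_def by simp
qed

lemma alloc_finite: "allocation n m A \<Longrightarrow> finite (A j)"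
  unfolding allocation_def by (cases "j < n") (auto intro: finite_subset[of _ "{..<m}"])

lemma cost_nonneg:
  assumes "chore_instance n m w v" "i < n" "S \<subseteq> {..<m}"
  shows "cost v i S \<ge> 0"
  unfolding cost_def using assms unfolding chore_instance_def
  by (intro sum_nonneg) auto

lemma wmms_opt:
  assumes ci: "chore_instance n m w v" and i: "i < n"
  shows "\<exists>\<mu> P. wmms n m w v i = w i * \<mu> \<and> \<mu> \<ge> 0 \<and> allocation n m P \<and> (\<forall>j<n. cost v i (P j) \<le> \<mu> * w j)"
proof -
  let ?F = "(\<lambda>A. Max ((\<lambda>j. cost v i (A j) / w j) ` {..<n}))"
  define \<mu> where "\<mu> = Min (?F ` allocations n m)"
  have n: "n \<ge> 1" using ci unfolding chore_instance_def by simp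
  have "\<mu> \<in> ?F ` allocations n m" unfolding \<mu>_def
    apply (rule Min_in) using finite_allocations allocations_ne[OF n] by auto
  then obtain P where P: "allocation n m P" and mu: "\<mu> = ?F P" by (auto simp: allocations_def)
  have le: "cost v i (P j) / w j \<le> \<mu>" if "j < n" for j
    unfolding mu by (rule Max_ge) (use that in auto)
  have wpos: "\<forall>j<n. w j > 0" using ci unfolding chore_instance_def by simp
  have "\<forall>j<n. cost v i (P j) \<le> \<mu> * w j"
    using le wpos by (simp add: divide_le_eq)
  moreover have "\<mu> \<ge> 0"
  proof -
    have "0 \<le> cost v i (P 0) / w 0"
      using cost_nonneg[OF ci i, of "P 0"] P wpos n unfolding allocation_def by auto
    also have "\<dots> \<le> \<mu>" using le n by auto
    finally show ?thesis .
  qed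
  ultimately show ?thesis using P unfolding wmms_def \<mu>_def by blast
qed

lemma sort_perm:
  fixes f :: "nat \<Rightarrow> real"
  shows "\<exists>\<sigma>. bij_betw \<sigma> {..<N} {..<N} \<and> (\<forall>a b. a \<le> b \<longrightarrow> b < N \<longrightarrow> f (\<sigma> b) \<le> f (\<sigma> a))"
proof -
  define xs where "xs = sort_key (\<lambda>x. - f x) [0..<N]"
  have d: "distinct xs" unfolding xs_def by (simp add: distinct_sort)
  have s: "set xs = {..<N}" unfolding xs_def by auto
  have l: "length xs = N" unfolding xs_def by simp
  have so: "sorted (map (\<lambda>x. - f x) xs)" unfolding xs_def by (rule sorted_sort_key)
  have "bij_betw ((!) xs) {..<N} {..<N}" using bij_betw_nth[OF d] l s by simp
  moreover have "\<forall>a b. a \<le> b \<longrightarrow> b < N \<longrightarrow> f (xs ! b) \<le> f (xs ! a)"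
  proof (intro allI impI)
    fix a b assume "a \<le> b" "b < N"
    moreover have "a < length xs" using \<open>a \<le> b\<close> \<open>b < N\<close> l by simp
    ultimately show "f (xs ! b) \<le> f (xs ! a)" using sorted_nth_mono[OF so, of a b] l by simp
  qed
  ultimately show ?thesis by blast
qed

lemma rank:
  fixes f :: "nat \<Rightarrow> real"
  assumes bij: "bij_betw \<sigma> {..<N} {..<N}"
    and so: "\<forall>a b. a \<le> b \<longrightarrow> b < N \<longrightarrow> f (\<sigma> b) \<le> f (\<sigma> a)"
    and t: "t < N" and R: "R \<subseteq> {..<N}" and c: "card R = Suc t"
  shows "\<exists>e\<in>R. f e \<le> f (\<sigma> t)"
proof (rule ccontr)
  assume "\<not> ?thesis"
  hence gt: "\<forall>e\<in>R. f e > f (\<sigma> t)" by auto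
  have "R \<subseteq> \<sigma> ` {..<t}"
  proof
    fix e assume e: "e \<in> R"
    then obtain s where s: "s < N" "e = \<sigma> s" using R bij unfolding bij_betw_def by auto
    have "s < t"
    proof (rule ccontr)
      assume "\<not> s < t"
      hence "f (\<sigma> s) \<le> f (\<sigma> t)" using so s by auto
      thus False using gt e s by auto
    qed
    thus "e \<in> \<sigma> ` {..<t}" using s by auto
  qed
  hence "card R \<le> card (\<sigma> ` {..<t})" by (intro card_mono) auto
  also have "\<dots> \<le> t" using card_image_le[of "{..<t}" \<sigma>] by simp
  finally show False using c by simp
qed

lemma pick:
  assumes "finite S" "card S = N"
    and "\<forall>t<N. \<forall>R\<subseteq>S. card R = Suc t \<longrightarrow> (\<exists>e\<in>R. g t e)"
  shows "\<exists>\<phi>. bij_betw \<phi> {..<N} S \<and> (\<forall>t<N. g t (\<phi> t))"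
  using assms
proof (induction N arbitrary: S)
  case 0
  hence "S = {}" by simp
  thus ?case by (auto simp: bij_betw_def)
next
  case (Suc N)
  then obtain e where e: "e \<in> S" "g N e" by blast
  define S' where "S' = S - {e}"
  have fS': "finite S'" "card S' = N" using Suc.prems e unfolding S'_def by auto
  have "\<forall>t<N. \<forall>R\<subseteq>S'. card R = Suc t \<longrightarrow> (\<exists>e\<in>R. g t e)"
    using Suc.prems(3) unfolding S'_def by (meson Diff_subset less_SucI order_trans)
  from Suc.IH[OF fS' this] obtain \<phi> where \<phi>: "bij_betw \<phi> {..<N} S'" "\<forall>t<N. g t (\<phi> t)" by blast
  define \<psi> where "\<psi> = \<phi>(N := e)"
  have b1: "bij_betw \<psi> {..<N} S'"
    using \<phi>(1) unfolding \<psi>_def by (rule bij_betw_cong[THEN iffD1, rotated]) auto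
  have "bij_betw \<psi> ({..<N} \<union> {N}) (S' \<union> {\<psi> N})"
    by (rule notIn_Un_bij_betw) (use b1 in \<open>auto simp: \<psi>_def S'_def\<close>)
  moreover have "{..<N} \<union> {N} = {..<Suc N}" by auto
  moreover have "S' \<union> {\<psi> N} = S" using e unfolding \<psi>_def S'_def by auto
  ultimately have "bij_betw \<psi> {..<Suc N} S" by simp
  moreover have "\<forall>t<Suc N. g t (\<psi> t)" using \<phi>(2) e unfolding \<psi>_def by (auto simp: less_Suc_eq)
  ultimately show ?case by blast
qed

lemma dyadic_round:
  fixes c x :: real
  assumes "c > 0" "x > 0" "x \<le> c"
  shows "\<exists>q::nat. x \<le> c / 2^q \<and> c / 2^q < 2 * x"
proof -
  obtain k :: nat where k: "c / (2*x) < of_nat k" using reals_Archimedean2 by blast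
  have "real k < 2^k" using of_nat_less_two_power by simp
  hence "c / (2*x) < 2^k" using k by linarith
  hence ex: "c / 2^k < 2 * x" using assms by (simp add: field_simps)
  define q where "q = (LEAST q::nat. c / 2^q < 2 * x)"
  have q1: "c / 2^q < 2 * x" unfolding q_def by (rule LeastI[of _ k]) (rule ex)
  have "x \<le> c / 2^q"
  proof (cases q)
    case 0 thus ?thesis using assms by simp
  next
    case (Suc q')
    hence "\<not> c / 2^q' < 2 * x" using not_less_Least[of q' "\<lambda>q. c / 2^q < 2 * x"] unfolding q_def by simp
    hence "c / 2^q' \<ge> 2 * x" by simp
    thus ?thesis using Suc by (simp add: field_simps)
  qed
  thus ?thesis using q1 by blast
qed

lemma conv:
  assumes ci: "chore_instance n m w v"
    and A': "allocation n m' A'"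
    and mm: "m \<le> m'"
    and pi: "bij_betw \<pi> {..<n} {..<n}"
    and C: "\<forall>k<n. C k \<ge> 0"
    and bnd: "\<forall>k<n. \<forall>t<m'. \<forall>R\<subseteq>{..<m'}. card R = Suc t \<longrightarrow>
                 (\<exists>e\<in>R. (if e < m then v (\<pi> k) e else 0) \<le> C k * V k t)"
  shows "\<exists>A. allocation n m A \<and> (\<forall>k<n. cost v (\<pi> k) (A (\<pi> k)) \<le> C k * cost V k (A' k))"
proof -
  define vh where "vh j e = (if e < m then v j e else 0)" for j e
  define own where "own t = (SOME k. k < n \<and> t \<in> A' k)" for t
  have own: "own t < n \<and> t \<in> A' (own t)" if "t < m'" for t
  proof -
    have "\<exists>k. k < n \<and> t \<in> A' k" using A' that unfolding allocation_def by auto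
    thus ?thesis unfolding own_def by (rule someI_ex)
  qed
  have own_u: "own t = k" if "k < n" "t \<in> A' k" for t k
  proof -
    have tm: "t < m'" using A' that unfolding allocation_def by auto
    show ?thesis
    proof (rule ccontr)
      assume "own t \<noteq> k"
      hence "A' (own t) \<inter> A' k = {}" using A' own[OF tm] that
        unfolding allocation_def disjoint_family_on_def by auto
      thus False using own[OF tm] that by auto
    qed
  qed
  define g where "g t e = (vh (\<pi> (own t)) e \<le> C (own t) * V (own t) t)" for t e
  have "\<forall>t<m'. \<forall>R\<subseteq>{..<m'}. card R = Suc t \<longrightarrow> (\<exists>e\<in>R. g t e)"
    using bnd own unfolding g_def vh_def by blast
  from pick[OF _ _ this] obtain \<phi> where phi: "bij_betw \<phi> {..<m'} {..<m'}" "\<forall>t<m'. g t (\<phi> t)"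
    by auto
  define \<psi> where "\<psi> = inv_into {..<m'} \<phi>"
  have psi: "\<psi> e < m' \<and> \<phi> (\<psi> e) = e" if "e < m'" for e
    using phi(1) that unfolding \<psi>_def bij_betw_def
    by (metis f_inv_into_f inv_into_into lessThan_iff)
  have psi2: "\<psi> (\<phi> t) = t" if "t < m'" for t
    using phi(1) that unfolding \<psi>_def bij_betw_def by auto
  define f where "f e = \<pi> (own (\<psi> e))" for e
  have fn: "\<forall>e<m. f e < n" unfolding f_def using own psi mm pi
    by (meson bij_betwE lessThan_iff order_less_le_trans)
  define A where "A = (\<lambda>j. if j<n then {e. e<m \<and> f e = j} else {})"
  have Aall: "allocation n m A" unfolding A_def by (rule func_alloc[OF fn])
  have "cost v (\<pi> k) (A (\<pi> k)) \<le> C k * cost V k (A' k)" if k: "k < n" for k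
  proof -
    have pk: "\<pi> k < n" using pi k by (auto simp: bij_betw_def)
    have X: "A (\<pi> k) = {e. e < m \<and> own (\<psi> e) = k}"
    proof -
      have "\<pi> (own (\<psi> e)) = \<pi> k \<longleftrightarrow> own (\<psi> e) = k" if "e < m" for e
      proof -
        have "own (\<psi> e) < n" using own psi that mm by auto
        thus ?thesis using pi k unfolding bij_betw_def inj_on_def by auto
      qed
      thus ?thesis unfolding A_def f_def using pk by auto
    qed
    have Y: "{e. e < m' \<and> own (\<psi> e) = k} = \<phi> ` A' k"
    proof
      show "{e. e < m' \<and> own (\<psi> e) = k} \<subseteq> \<phi> ` A' k"
      proof
        fix e assume "e \<in> {e. e < m' \<and> own (\<psi> e) = k}"
        hence e: "e < m'" "own (\<psi> e) = k" by auto
        hence "\<psi> e \<in> A' k" using own psi by metis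
        thus "e \<in> \<phi> ` A' k" using psi e by (metis image_eqI)
      qed
    next
      show "\<phi> ` A' k \<subseteq> {e. e < m' \<and> own (\<psi> e) = k}"
      proof
        fix e assume "e \<in> \<phi> ` A' k"
        then obtain t where t: "t \<in> A' k" "e = \<phi> t" by auto
        have tm: "t < m'" using A' t k unfolding allocation_def by auto
        show "e \<in> {e. e < m' \<and> own (\<psi> e) = k}"
          using t tm psi2 own_u[OF k t(1)] phi(1) by (auto simp: bij_betw_def)
      qed
    qed
    have "cost v (\<pi> k) (A (\<pi> k)) = (\<Sum>e\<in>{e. e < m \<and> own (\<psi> e) = k}. vh (\<pi> k) e)"
      unfolding cost_def X vh_def by simp
    also have "\<dots> \<le> (\<Sum>e\<in>{e. e < m' \<and> own (\<psi> e) = k}. vh (\<pi> k) e)"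
      apply (rule sum_mono2)
      using mm ci pk unfolding vh_def chore_instance_def by auto
    also have "\<dots> = (\<Sum>t\<in>A' k. vh (\<pi> k) (\<phi> t))"
      unfolding Y
      apply (rule sum.reindex[unfolded comp_def])
      apply (rule inj_on_subset[of _ "{..<m'}"])
      using phi(1) A' k unfolding bij_betw_def allocation_def by auto
    also have "\<dots> \<le> (\<Sum>t\<in>A' k. C k * V k t)"
    proof (rule sum_mono)
      fix t assume t: "t \<in> A' k"
      have tm: "t < m'" using A' t k unfolding allocation_def by auto
      show "vh (\<pi> k) (\<phi> t) \<le> C k * V k t"
        using phi(2) tm own_u[OF k t] unfolding g_def by auto
    qed
    also have "\<dots> = C k * cost V k (A' k)" unfolding cost_def by (simp add: sum_distrib_left)
    finally show ?thesis .
  qed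
  thus ?thesis using Aall by blast
qed

lemma dy_mult:
  fixes c :: real
  assumes "p \<le> Q"
  shows "c / 2^p = of_nat (2^(Q-p)) * (c / 2^Q)"
proof -
  have "(2::real)^Q = 2^(Q-p) * 2^p" using assms by (simp add: power_add[symmetric])
  thus ?thesis by (simp add: field_simps)
qed

lemma sum_ind_count:
  fixes u :: real
  assumes "c \<le> L"
  shows "(\<Sum>s<L. if s < c then u else 0) = of_nat c * u"
proof -
  have "(\<Sum>s<L. if s < c then u else 0) = sum (\<lambda>_. u) ({..<L} \<inter> {s. s < c})"
    by (simp add: sum.If_cases)
  also have "{..<L} \<inter> {s. s < c} = {..<c}" using assms by auto
  finally show ?thesis by simp
qed

lemma fill:
  fixes c :: real and T b :: "nat \<Rightarrow> real"
  assumes c: "c > 0" and n: "n \<ge> 1"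
    and T: "\<forall>l<n. \<exists>p. T l = c / 2^p"
    and P: "allocation n m P"
    and b: "\<forall>e<m. b e \<ge> 0"
    and bs: "\<forall>l<n. (\<Sum>e\<in>P l. b e) \<le> T l / 2"
  shows "\<exists>L0. \<forall>L>L0. \<exists>y Q. (\<forall>e. y e = 0 \<or> (\<exists>p. y e = c / 2^p)) \<and> (\<forall>e<m. b e \<le> y e)
            \<and> allocation n (m + n*L) Q \<and> (\<forall>l<n. sum y (Q l) = T l)"
proof -
  obtain pT where pT: "\<forall>l<n. T l = c / 2^(pT l)" using T by metis
  define ownP where "ownP e = (SOME l. l < n \<and> e \<in> P l)" for e
  have ownP: "ownP e < n \<and> e \<in> P (ownP e)" if "e < m" for e
  proof -
    have "\<exists>l. l < n \<and> e \<in> P l" using P that unfolding allocation_def by auto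
    thus ?thesis unfolding ownP_def by (rule someI_ex)
  qed
  have Tle: "T l \<le> c" if "l < n" for l
  proof -
    have "c / 2^(pT l) \<le> c / 1" using c by (intro divide_left_mono) auto
    thus ?thesis using pT that by simp
  qed
  have bc: "b e \<le> c" if "e < m" for e
  proof -
    have "b e \<le> (\<Sum>e\<in>P (ownP e). b e)"
      apply (rule member_le_sum)
      using ownP[OF that] P b unfolding allocation_def by (auto intro: finite_subset)
    also have "\<dots> \<le> T (ownP e) / 2" using bs ownP[OF that] by auto
    also have "\<dots> \<le> c" using Tle[of "ownP e"] ownP[OF that] c by auto
    finally show ?thesis .
  qed
  have "\<forall>e. \<exists>q. e < m \<and> b e > 0 \<longrightarrow> b e \<le> c / 2^q \<and> c / 2^q < 2 * b e"
    using dyadic_round[OF c] bc by blast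
  then obtain qy where qy: "\<forall>e. e < m \<and> b e > 0 \<longrightarrow> b e \<le> c / 2^(qy e) \<and> c / 2^(qy e) < 2 * b e"
    by metis
  define y0 where "y0 e = (if e < m \<and> b e > 0 then c / 2^(qy e) else 0)" for e
  define Q0 where "Q0 = (\<Sum>l<n. pT l) + (\<Sum>e<m. qy e)"
  define u where "u = c / 2^Q0"
  have upos: "u > 0" unfolding u_def using c by simp
  define NT where "NT l = (2::nat)^(Q0 - pT l)" for l
  define Ny where "Ny e = (if e < m \<and> b e > 0 then (2::nat)^(Q0 - qy e) else 0)" for e
  have TN: "T l = of_nat (NT l) * u" if "l < n" for l
  proof -
    have "pT l \<le> Q0" unfolding Q0_def using that by (simp add: member_le_sum trans_le_add1)
    thus ?thesis using pT that unfolding NT_def u_def by (simp add: dy_mult)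
  qed
  have yN: "y0 e = of_nat (Ny e) * u" for e
  proof (cases "e < m \<and> b e > 0")
    case True
    have "qy e \<le> Q0" unfolding Q0_def using True by (simp add: member_le_sum trans_le_add2)
    thus ?thesis using True unfolding y0_def Ny_def u_def by (simp add: dy_mult)
  qed (auto simp: y0_def Ny_def)
  have y0b: "b e \<le> y0 e \<and> y0 e \<le> 2 * b e" if "e < m" for e
    using qy b that unfolding y0_def by (cases "b e > 0") auto
  define X where "X l = {e. e < m \<and> ownP e = l}" for l
  have XP: "X l \<subseteq> P l" for l unfolding X_def using ownP by auto
  have Xfin: "finite (X l)" for l unfolding X_def by auto
  have SX: "(\<Sum>e\<in>X l. Ny e) \<le> NT l" if l: "l < n" for l
  proof -
    have "(\<Sum>e\<in>X l. y0 e) \<le> (\<Sum>e\<in>X l. 2 * b e)"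
      by (rule sum_mono) (use y0b in \<open>auto simp: X_def\<close>)
    also have "\<dots> = 2 * (\<Sum>e\<in>X l. b e)" by (simp add: sum_distrib_left)
    also have "\<dots> \<le> 2 * (\<Sum>e\<in>P l. b e)"
      apply (rule mult_left_mono, rule sum_mono2)
      using P XP b l alloc_finite[OF P] unfolding allocation_def by auto
    also have "\<dots> \<le> T l" using bs l by auto
    finally have "of_nat (\<Sum>e\<in>X l. Ny e) * u \<le> of_nat (NT l) * u"
      using TN[OF l] yN by (simp add: sum_distrib_right)
    hence "real (\<Sum>e\<in>X l. Ny e) \<le> real (NT l)" using upos by simp
    thus ?thesis by linarith
  qed
  define cnt where "cnt l = NT l - (\<Sum>e\<in>X l. Ny e)" for l
  define L0 where "L0 = (\<Sum>l<n. cnt l)"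
  have cntL: "cnt l \<le> L0" if "l < n" for l unfolding L0_def using that by (simp add: member_le_sum)
  show ?thesis
  proof (intro exI allI impI)
    fix L assume L: "L > L0"
    define y where "y e = (if e < m then y0 e else if (e - m) mod L < cnt ((e - m) div L) then u else 0)" for e
    define fb where "fb e = (if e < m then ownP e else (e - m) div L)" for e
    define Q where "Q = (\<lambda>j. if j<n then {e. e < m + n*L \<and> fb e = j} else {})"
    have fbn: "\<forall>e<m + n*L. fb e < n"
    proof (intro allI impI)
      fix e assume e: "e < m + n*L"
      show "fb e < n"
      proof (cases "e < m")
        case True thus ?thesis using ownP unfolding fb_def by auto
      next
        case False
        hence "e - m < L * n" using e by (simp add: mult.commute)
        hence "(e - m) div L < n" by (metis div_less_iff_less_mult gr_implies_not0 mult_0_right mult.commute neq0_conv)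
        thus ?thesis using False unfolding fb_def by simp
      qed
    qed
    have Qa: "allocation n (m + n*L) Q" unfolding Q_def by (rule func_alloc[OF fbn])
    have ydy: "\<forall>e. y e = 0 \<or> (\<exists>p. y e = c / 2^p)"
      unfolding y_def y0_def u_def by auto
    have yb: "\<forall>e<m. b e \<le> y e" using y0b unfolding y_def by auto
    have Qs: "sum y (Q l) = T l" if l: "l < n" for l
    proof -
      define D where "D = {e. m \<le> e \<and> e < m + n*L \<and> (e - m) div L = l}"
      have QXD: "Q l = X l \<union> D"
        unfolding Q_def X_def D_def fb_def using l by auto
      have XD: "X l \<inter> D = {}" unfolding X_def D_def by auto
      have Dimg: "D = (\<lambda>s. m + l*L + s) ` {..<L}"
      proof
        show "D \<subseteq> (\<lambda>s. m + l*L + s) ` {..<L}"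
        proof
          fix e assume "e \<in> D"
          hence e: "m \<le> e" "(e - m) div L = l" unfolding D_def by auto
          have "e = m + l*L + (e - m) mod L" using e
            by (metis add.assoc le_add_diff_inverse mult.commute div_mult_mod_eq)
          moreover have "(e - m) mod L < L" using L by simp
          ultimately show "e \<in> (\<lambda>s. m + l*L + s) ` {..<L}" by blast
        qed
      next
        show "(\<lambda>s. m + l*L + s) ` {..<L} \<subseteq> D"
        proof
          fix e assume "e \<in> (\<lambda>s. m + l*L + s) ` {..<L}"
          then obtain s where s: "s < L" "e = m + l*L + s" by auto
          have "l*L + s < Suc l * L" using s by simp
          also have "\<dots> \<le> n * L" using l by (intro mult_right_mono) auto
          finally have "e < m + n*L" using s by simp
          moreover have "(e - m) div L = l" using s by simp
          ultimately show "e \<in> D" unfolding D_def using s by simp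
        qed
      qed
      have "sum y D = (\<Sum>s<L. y (m + l*L + s))"
        unfolding Dimg by (subst sum.reindex) (auto simp: inj_on_def)
      also have "\<dots> = (\<Sum>s<L. if s < cnt l then u else 0)"
        by (rule sum.cong) (auto simp: y_def)
      also have "\<dots> = of_nat (cnt l) * u" using cntL[OF l] L by (intro sum_ind_count) simp
      finally have sD: "sum y D = of_nat (cnt l) * u" .
      have sX: "sum y (X l) = of_nat (\<Sum>e\<in>X l. Ny e) * u"
        unfolding of_nat_sum sum_distrib_right
        by (rule sum.cong) (auto simp: X_def y_def yN)
      have "sum y (Q l) = sum y (X l) + sum y D"
        unfolding QXD by (rule sum.union_disjoint) (use XD Xfin in \<open>auto simp: D_def\<close>)
      also have "\<dots> = of_nat ((\<Sum>e\<in>X l. Ny e) + cnt l) * u" using sX sD by (simp add: algebra_simps)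
      also have "(\<Sum>e\<in>X l. Ny e) + cnt l = NT l" unfolding cnt_def using SX[OF l] by simp
      finally show ?thesis using TN[OF l] by simp
    qed
    show "(\<forall>e. y e = 0 \<or> (\<exists>p. y e = c / 2^p)) \<and> (\<forall>e<m. b e \<le> y e)
            \<and> allocation n (m + n*L) Q \<and> (\<forall>l<n. sum y (Q l) = T l)"
      using ydy yb Qa Qs by blast
  qed
qed

lemma weights:
  fixes wp :: "nat \<Rightarrow> real"
  assumes n: "n \<ge> 1" and pos: "\<forall>k<n. wp k > 0"
    and so: "\<forall>a b. a \<le> b \<longrightarrow> b < n \<longrightarrow> wp b \<le> wp a"
  shows "\<exists>w' K. (\<forall>k<n. w' k > 0) \<and> (\<forall>a b. a \<le> b \<longrightarrow> b < n \<longrightarrow> w' b \<le> w' a)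
    \<and> (\<Sum>k<n. w' k) = 1 \<and> (\<forall>k<n. \<exists>p::nat. w' k = w' 0 / 2^p) \<and> K > 0
    \<and> (\<forall>k<n. w' k \<le> K * wp k \<and> K * wp k \<le> 2 * w' k)"
proof -
  define r where "r k = wp k / wp 0" for k
  have w0: "wp 0 > 0" using pos n by auto
  have r: "0 < r k \<and> r k \<le> 1" if "k < n" for k
    using pos so that w0 unfolding r_def by auto
  have "\<forall>k. \<exists>q::nat. k < n \<longrightarrow> r k / 2 \<le> 1 / 2^q \<and> 1 / 2^q < 2 * (r k / 2)"
  proof (intro allI)
    fix k show "\<exists>q::nat. k < n \<longrightarrow> r k / 2 \<le> 1 / 2^q \<and> 1 / 2^q < 2 * (r k / 2)"
    proof (cases "k < n")
      case True
      from dyadic_round[of 1 "r k / 2"] r[OF True] show ?thesis by auto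
    qed auto
  qed
  then obtain q where q0: "\<forall>k<n. r k / 2 \<le> 1 / 2^(q k) \<and> 1 / 2^(q k) < 2 * (r k / 2)" by metis
  hence q: "\<forall>k<n. r k / 2 \<le> 1 / 2^(q k) \<and> 1 / 2^(q k) < r k" by simp
  define d where "d k = (1::real) / 2^(q k)" for k
  have dpos: "d k > 0" for k unfolding d_def by simp
  have qmono: "q a \<le> q b" if "a \<le> b" "b < n" for a b
  proof -
    have "d b < r b" using q that unfolding d_def by auto
    also have "r b \<le> r a" using so that w0 unfolding r_def by (simp add: divide_right_mono)
    also have "r a \<le> 2 * d a" using q that unfolding d_def by auto
    finally have "1 / 2^(q b) < 2 / (2::real)^(q a)" unfolding d_def by simp
    hence "(2::real)^(q a) < 2 * 2^(q b)" by (simp add: field_simps)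
    hence "(2::real)^(q a) < 2^(Suc (q b))" by simp
    hence "q a < Suc (q b)" by (subst (asm) power_strict_increasing_iff) auto
    thus ?thesis by simp
  qed
  define Z where "Z = (\<Sum>k<n. d k)"
  have Zpos: "Z > 0" unfolding Z_def using n dpos by (intro sum_pos) (auto simp: lessThan_empty_iff)
  define w' where "w' k = d k / Z" for k
  define K where "K = 1 / (Z * wp 0)"
  have "(\<Sum>k<n. w' k) = 1" unfolding w'_def Z_def using Zpos Z_def
    by (simp add: sum_divide_distrib[symmetric])
  moreover have "\<forall>k<n. w' k > 0" unfolding w'_def using dpos Zpos by simp
  moreover have "\<forall>a b. a \<le> b \<longrightarrow> b < n \<longrightarrow> w' b \<le> w' a"
  proof (intro allI impI)
    fix a b assume ab: "a \<le> b" "b < n"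
    have "d b \<le> d a" unfolding d_def using qmono[OF ab]
      by (simp add: field_simps power_increasing)
    thus "w' b \<le> w' a" unfolding w'_def using Zpos by (simp add: divide_right_mono)
  qed
  moreover have "\<forall>k<n. \<exists>p::nat. w' k = w' 0 / 2^p"
  proof (intro allI impI exI)
    fix k assume k: "k < n"
    have "q 0 \<le> q k" using qmono[of 0 k] k by simp
    hence "(2::real)^(q k) = 2^(q 0) * 2^(q k - q 0)" by (simp add: power_add[symmetric])
    thus "w' k = w' 0 / 2^(q k - q 0)" unfolding w'_def d_def by simp
  qed
  moreover have "K > 0" unfolding K_def using Zpos w0 by simp
  moreover have "\<forall>k<n. w' k \<le> K * wp k \<and> K * wp k \<le> 2 * w' k"
  proof (intro allI impI)
    fix k assume k: "k < n"
    have "K * wp k = r k / Z" unfolding K_def r_def by simp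
    moreover have "d k < r k" "r k \<le> 2 * d k" using q k unfolding d_def by auto
    ultimately show "w' k \<le> K * wp k \<and> K * wp k \<le> 2 * w' k"
      unfolding w'_def using Zpos by (auto simp: field_simps)
  qed
  ultimately show ?thesis by blast
qed

lemma perm_alloc:
  assumes pi: "bij_betw \<pi> {..<n} {..<n}" and P: "allocation n m P"
  shows "allocation n m (\<lambda>l. if l < n then P (\<pi> l) else {})"
proof -
  have "(\<Union>l<n. P (\<pi> l)) = (\<Union>j\<in>\<pi> ` {..<n}. P j)" by auto
  also have "\<pi> ` {..<n} = {..<n}" using pi by (simp add: bij_betw_def)
  finally have U: "(\<Union>l<n. P (\<pi> l)) = {..<m}" using P unfolding allocation_def by simp
  show ?thesis unfolding allocation_def
  proof (intro conjI allI impI)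
    show "\<And>j. j < n \<Longrightarrow> (if j < n then P (\<pi> j) else {}) \<subseteq> {..<m}"
      using P pi unfolding allocation_def bij_betw_def by auto
    show "(\<Union>j<n. if j < n then P (\<pi> j) else {}) = {..<m}" using U by simp
    show "disjoint_family_on (\<lambda>l. if l < n then P (\<pi> l) else {}) {..<n}"
      unfolding disjoint_family_on_def
    proof (intro ballI impI)
      fix a b assume ab: "a \<in> {..<n}" "b \<in> {..<n}" "a \<noteq> b"
      have "\<pi> a \<noteq> \<pi> b" using pi ab unfolding bij_betw_def inj_on_def by blast
      moreover have "\<pi> a \<in> {..<n}" "\<pi> b \<in> {..<n}" using pi ab unfolding bij_betw_def by auto
      ultimately have "P (\<pi> a) \<inter> P (\<pi> b) = {}"
        using P unfolding allocation_def disjoint_family_on_def by blast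
      thus "(if a < n then P (\<pi> a) else {}) \<inter> (if b < n then P (\<pi> b) else {}) = {}" by simp
    qed
  qed simp
qed

lemma perm_items:
  assumes tau: "bij_betw \<tau> {..<M} {..<M}" and Q: "allocation n M Q"
  shows "allocation n M (\<lambda>l. if l < n then {t. t < M \<and> \<tau> t \<in> Q l} else {})"
    and "\<And>l. l < n \<Longrightarrow> (\<Sum>t\<in>{t. t < M \<and> \<tau> t \<in> Q l}. y (\<tau> t)) = sum y (Q l)"
proof -
  show "allocation n M (\<lambda>l. if l < n then {t. t < M \<and> \<tau> t \<in> Q l} else {})"
    unfolding allocation_def
  proof (intro conjI allI impI)
    show "(\<Union>j<n. if j < n then {t. t < M \<and> \<tau> t \<in> Q j} else {}) = {..<M}"
    proof
      show "{..<M} \<subseteq> (\<Union>j<n. if j < n then {t. t < M \<and> \<tau> t \<in> Q j} else {})"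
      proof
        fix t assume "t \<in> {..<M}"
        hence "\<tau> t \<in> {..<M}" using tau by (auto simp: bij_betw_def)
        hence "\<tau> t \<in> (\<Union>j<n. Q j)" using Q unfolding allocation_def by auto
        then obtain j where "j < n" "\<tau> t \<in> Q j" by auto
        thus "t \<in> (\<Union>j<n. if j < n then {t. t < M \<and> \<tau> t \<in> Q j} else {})" using \<open>t \<in> {..<M}\<close> by auto
      qed
    qed auto
    show "disjoint_family_on (\<lambda>l. if l < n then {t. t < M \<and> \<tau> t \<in> Q l} else {}) {..<n}"
      using Q unfolding allocation_def disjoint_family_on_def by (auto simp: disjoint_iff)
  qed auto
next
  fix l assume l: "l < n"
  have "Q l \<subseteq> {..<M}" using Q l unfolding allocation_def by auto
  have "bij_betw \<tau> {t. t < M \<and> \<tau> t \<in> Q l} (Q l)"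
  proof -
    have "\<tau> ` {t. t < M \<and> \<tau> t \<in> Q l} = Q l"
    proof
      show "Q l \<subseteq> \<tau> ` {t. t < M \<and> \<tau> t \<in> Q l}"
      proof
        fix e assume e: "e \<in> Q l"
        hence "e \<in> \<tau> ` {..<M}" using \<open>Q l \<subseteq> {..<M}\<close> tau by (auto simp: bij_betw_def)
        then obtain t where "t < M" "e = \<tau> t" by auto
        thus "e \<in> \<tau> ` {t. t < M \<and> \<tau> t \<in> Q l}" using e by auto
      qed
    qed auto
    moreover have "inj_on \<tau> {t. t < M \<and> \<tau> t \<in> Q l}"
      using tau unfolding bij_betw_def by (rule inj_on_subset[OF conjunct1]) auto
    ultimately show ?thesis unfolding bij_betw_def by simp
  qed
  thus "(\<Sum>t\<in>{t. t < M \<and> \<tau> t \<in> Q l}. y (\<tau> t)) = sum y (Q l)"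
    by (rule sum.reindex_bij_betw)
qed

lemma construct:
  assumes ci: "chore_instance n m w v"
  shows "\<exists>m' w' V \<pi> C. m \<le> m' \<and> canonical n m' w' V \<and> bij_betw \<pi> {..<n} {..<n}
     \<and> (\<forall>k<n. C k \<ge> 0 \<and> C k * w' k = 4 * wmms n m w v (\<pi> k))
     \<and> (\<forall>k<n. \<forall>t<m'. \<forall>R\<subseteq>{..<m'}. card R = Suc t \<longrightarrow>
          (\<exists>e\<in>R. (if e < m then v (\<pi> k) e else 0) \<le> C k * V k t))"
proof -
  have n: "n \<ge> 1" and wpos: "\<forall>i<n. w i > 0" and vnn: "\<forall>i<n. \<forall>e<m. v i e \<ge> 0"
    using ci unfolding chore_instance_def by auto
  obtain \<pi> where pi: "bij_betw \<pi> {..<n} {..<n}"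
    and pso: "\<forall>a b. a \<le> b \<longrightarrow> b < n \<longrightarrow> w (\<pi> b) \<le> w (\<pi> a)"
    using sort_perm[of n w] by blast
  have pin: "\<pi> k < n" if "k < n" for k using pi that unfolding bij_betw_def by auto
  have "\<forall>k<n. w (\<pi> k) > 0" using wpos pin by auto
  from weights[OF n this pso] obtain w' K where
    w'pos: "\<forall>k<n. w' k > 0" and w'so: "\<forall>a b. a \<le> b \<longrightarrow> b < n \<longrightarrow> w' b \<le> w' a"
    and w'sum: "(\<Sum>k<n. w' k) = 1" and w'dy: "\<forall>k<n. \<exists>p::nat. w' k = w' 0 / 2^p"
    and Kpos: "K > 0" and Kr: "\<forall>k<n. w' k \<le> K * w (\<pi> k) \<and> K * w (\<pi> k) \<le> 2 * w' k"
    by blast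
  have w00: "w' 0 > 0" using w'pos n by auto
  have "\<forall>i. \<exists>\<mu> P. i < n \<longrightarrow> (wmms n m w v i = w i * \<mu> \<and> \<mu> \<ge> 0 \<and> allocation n m P
          \<and> (\<forall>j<n. cost v i (P j) \<le> \<mu> * w j))"
    using wmms_opt[OF ci] by blast
  then obtain \<mu> P where mu: "\<forall>i<n. wmms n m w v i = w i * \<mu> i \<and> \<mu> i \<ge> 0 \<and> allocation n m (P i)
          \<and> (\<forall>j<n. cost v i (P i j) \<le> \<mu> i * w j)"
    by metis
  define b where "b k e = v (\<pi> k) e * w' k / (4 * \<mu> (\<pi> k) * w (\<pi> k))" for k e
  define P' where "P' k = (\<lambda>l. if l < n then P (\<pi> k) (\<pi> l) else {})" for k
  have P'a: "allocation n m (P' k)" if "k < n" for k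
    unfolding P'_def by (rule perm_alloc[OF pi]) (use mu pin that in blast)
  have bnn: "\<forall>e<m. b k e \<ge> 0" if "k < n" for k
  proof (intro allI impI)
    fix e assume e: "e < m"
    have "0 \<le> v (\<pi> k) e * w' k" using vnn w'pos pin that e by (simp add: less_imp_le)
    moreover have "0 \<le> 4 * \<mu> (\<pi> k) * w (\<pi> k)" using mu wpos pin that by (simp add: less_imp_le)
    ultimately show "0 \<le> b k e" unfolding b_def by (rule divide_nonneg_nonneg)
  qed
  have bs: "\<forall>l<n. (\<Sum>e\<in>P' k l. b k e) \<le> w' l / 2" if k: "k < n" for k
  proof (intro allI impI)
    fix l assume l: "l < n"
    let ?i = "\<pi> k"
    have i: "?i < n" using pin k by simp
    show "(\<Sum>e\<in>P' k l. b k e) \<le> w' l / 2"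
    proof (cases "\<mu> ?i = 0")
      case True
      thus ?thesis unfolding b_def using w'pos l by (simp add: less_imp_le)
    next
      case False
      hence mpos: "\<mu> ?i > 0" using mu i by force
      have wi: "w ?i > 0" using wpos i by simp
      have "(\<Sum>e\<in>P' k l. b k e) = cost v ?i (P ?i (\<pi> l)) * w' k / (4 * \<mu> ?i * w ?i)"
        unfolding b_def P'_def cost_def using l by (simp add: sum_divide_distrib sum_distrib_right)
      also have "\<dots> \<le> (\<mu> ?i * w (\<pi> l)) * w' k / (4 * \<mu> ?i * w ?i)"
        apply (intro divide_right_mono mult_right_mono)
        using mu i pin l w'pos k mpos wi by auto
      also have "\<dots> = w (\<pi> l) * w' k / (4 * w ?i)" using mpos by simp
      also have "\<dots> \<le> w (\<pi> l) * (K * w ?i) / (4 * w ?i)"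
        apply (intro divide_right_mono mult_left_mono)
        using Kr k l wi wpos pin[OF l] by (auto intro: less_imp_le)
      also have "\<dots> = K * w (\<pi> l) / 4" using wi by simp
      also have "\<dots> \<le> w' l / 2" using Kr l by auto
      finally show ?thesis .
    qed
  qed
  have "\<forall>k. \<exists>L0. k < n \<longrightarrow> (\<forall>L>L0. \<exists>y Q. (\<forall>e. y e = 0 \<or> (\<exists>p. y e = w' 0 / 2^p)) \<and> (\<forall>e<m. b k e \<le> y e)
            \<and> allocation n (m + n*L) Q \<and> (\<forall>l<n. sum y (Q l) = w' l))"
    using fill[OF w00 n w'dy P'a bnn bs] by blast
  then obtain L0 where L0: "\<forall>k<n. \<forall>L>L0 k. \<exists>y Q. (\<forall>e. y e = 0 \<or> (\<exists>p. y e = w' 0 / 2^p)) \<and> (\<forall>e<m. b k e \<le> y e)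
            \<and> allocation n (m + n*L) Q \<and> (\<forall>l<n. sum y (Q l) = w' l)"
    by metis
  define L where "L = (\<Sum>k<n. L0 k) + 1"
  have LL: "L > L0 k" if "k < n" for k
    unfolding L_def using that by (simp add: le_imp_less_Suc member_le_sum)
  have "\<forall>k. \<exists>y Q. k < n \<longrightarrow> ((\<forall>e. y e = 0 \<or> (\<exists>p. y e = w' 0 / 2^p)) \<and> (\<forall>e<m. b k e \<le> y e)
            \<and> allocation n (m + n*L) Q \<and> (\<forall>l<n. sum y (Q l) = w' l))"
    using L0 LL by blast
  then obtain y Q where yQ: "\<forall>k<n. (\<forall>e. y k e = 0 \<or> (\<exists>p. y k e = w' 0 / 2^p)) \<and> (\<forall>e<m. b k e \<le> y k e)
            \<and> allocation n (m + n*L) (Q k) \<and> (\<forall>l<n. sum (y k) (Q k l) = w' l)"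
    by metis
  define m' where "m' = m + n*L"
  have ynn: "y k e \<ge> 0" if "k < n" for k e
    using yQ that w00 by (metis order_refl divide_nonneg_pos less_eq_real_def zero_less_power zero_less_numeral)
  have "\<forall>k. \<exists>\<tau>. bij_betw \<tau> {..<m'} {..<m'} \<and> (\<forall>a b. a \<le> b \<longrightarrow> b < m' \<longrightarrow> y k (\<tau> b) \<le> y k (\<tau> a))"
    using sort_perm by blast
  then obtain \<tau> where tau: "\<forall>k. bij_betw (\<tau> k) {..<m'} {..<m'} \<and> (\<forall>a b. a \<le> b \<longrightarrow> b < m' \<longrightarrow> y k (\<tau> k b) \<le> y k (\<tau> k a))"
    by metis
  define V where "V k t = y k (\<tau> k t)" for k t
  define Q' where "Q' k = (\<lambda>l. if l < n then {t. t < m' \<and> \<tau> k t \<in> Q k l} else {})" for k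
  have Q'a: "allocation n m' (Q' k)" if "k < n" for k
    unfolding Q'_def apply (rule perm_items(1)) using tau yQ that unfolding m'_def by auto
  have Q's: "\<forall>l<n. cost V k (Q' k l) = w' l" if k: "k < n" for k
  proof (intro allI impI)
    fix l assume l: "l < n"
    have "cost V k (Q' k l) = (\<Sum>t\<in>{t. t < m' \<and> \<tau> k t \<in> Q k l}. y k (\<tau> k t))"
      unfolding cost_def V_def Q'_def using l by simp
    also have "\<dots> = sum (y k) (Q k l)"
      apply (rule perm_items(2)) using tau yQ k l unfolding m'_def by auto
    also have "\<dots> = w' l" using yQ k l by auto
    finally show "cost V k (Q' k l) = w' l" .
  qed
  have can: "canonical n m' w' V"
    unfolding canonical_def chore_instance_def
  proof (intro conjI allI impI)
    show "1 \<le> n" by (rule n)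
    show "\<And>i. i < n \<Longrightarrow> 0 < w' i" using w'pos by auto
    show "\<And>i e. i < n \<Longrightarrow> e < m' \<Longrightarrow> 0 \<le> V i e" unfolding V_def using ynn by auto
    show "\<And>i j. i \<le> j \<and> j < n \<Longrightarrow> w' j \<le> w' i" using w'so by auto
    show "(\<Sum>k<n. w' k) = 1" by (rule w'sum)
    show "\<And>i. i < n \<Longrightarrow> \<exists>p. w' i = w' 0 / 2 ^ p" using w'dy by auto
    show "\<And>i. i < n \<Longrightarrow> cost V i {..<m'} = 1"
    proof -
      fix i assume i: "i < n"
      have "cost V i {..<m'} = (\<Sum>l<n. cost V i (Q' i l))" using alloc_sum[OF Q'a[OF i]] by simp
      also have "\<dots> = (\<Sum>l<n. w' l)" using Q's[OF i] by simp
      finally show "cost V i {..<m'} = 1" using w'sum by simp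
    qed
    show "\<And>i e. i < n \<Longrightarrow> e < m' \<Longrightarrow> V i e = 0 \<or> (\<exists>p. V i e = w' 0 / 2 ^ p)"
      unfolding V_def using yQ by auto
    show "\<And>i e e'. i < n \<Longrightarrow> e \<le> e' \<and> e' < m' \<Longrightarrow> V i e' \<le> V i e"
      unfolding V_def using tau by auto
    show "\<And>i. i < n \<Longrightarrow> wmms n m' w' V i = w' i"
      using exact_wmms[OF n _ Q'a Q's] w'pos by auto
  qed
  define C where "C k = 4 * \<mu> (\<pi> k) * w (\<pi> k) / w' k" for k
  have Cnn: "C k \<ge> 0" if "k < n" for k
  proof -
    have a: "\<mu> (\<pi> k) \<ge> 0" using mu pin that by auto
    have b: "w (\<pi> k) > 0" using wpos pin that by auto
    have c: "w' k > 0" using w'pos that by auto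
    show ?thesis unfolding C_def using a b c by (intro divide_nonneg_pos mult_nonneg_nonneg) auto
  qed
  have Cw: "C k * w' k = 4 * wmms n m w v (\<pi> k)" if "k < n" for k
  proof -
    have a: "wmms n m w v (\<pi> k) = w (\<pi> k) * \<mu> (\<pi> k)" using mu pin that by auto
    have c: "w' k > 0" using w'pos that by auto
    show ?thesis unfolding C_def a using c by simp
  qed
  have key: "(if e < m then v (\<pi> k) e else 0) \<le> C k * y k e" if k: "k < n" and e: "e < m'" for k e
  proof (cases "e < m")
    case False thus ?thesis using Cnn[OF k] ynn[OF k] by simp
  next
    case True
    let ?i = "\<pi> k"
    have i: "?i < n" using pin k by simp
    show ?thesis
    proof (cases "\<mu> ?i = 0")
      case True0: True
      have "e \<in> (\<Union>j<n. P ?i j)" using mu i True unfolding allocation_def by auto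
      then obtain j where j: "j < n" "e \<in> P ?i j" by auto
      have sub: "P ?i j \<subseteq> {..<m}" using mu i j unfolding allocation_def by auto
      have fin: "finite (P ?i j)" using alloc_finite mu i by blast
      have "v ?i e \<le> cost v ?i (P ?i j)" unfolding cost_def
        by (rule member_le_sum) (use j(2) sub vnn i fin in \<open>auto simp: subset_iff\<close>)
      also have "\<dots> \<le> 0" using mu i j True0 by force
      finally show ?thesis using True Cnn[OF k] ynn[OF k] by (simp add: mult_nonneg_nonneg order_trans)
    next
      case False
      hence mpos: "\<mu> ?i > 0" using mu i by force
      have "v ?i e = C k * b k e" unfolding C_def b_def using mpos wpos w'pos i k by auto
      also have "\<dots> \<le> C k * y k e" using yQ k True Cnn[OF k] by (intro mult_left_mono) auto
      finally show ?thesis using True by simp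
    qed
  qed
  have bnd: "\<forall>k<n. \<forall>t<m'. \<forall>R\<subseteq>{..<m'}. card R = Suc t \<longrightarrow>
          (\<exists>e\<in>R. (if e < m then v (\<pi> k) e else 0) \<le> C k * V k t)"
  proof (intro allI impI)
    fix k t R assume k: "k < n" and t: "t < m'" and R: "R \<subseteq> {..<m'}" and c: "card R = Suc t"
    obtain e where e: "e \<in> R" "y k e \<le> y k (\<tau> k t)"
      using rank[of "\<tau> k" m' "y k" t R] tau t R c by blast
    have em: "e < m'" using e R by auto
    have "(if e < m then v (\<pi> k) e else 0) \<le> C k * y k e" by (rule key[OF k em])
    also have "\<dots> \<le> C k * V k t" unfolding V_def using e Cnn[OF k] by (intro mult_left_mono) auto
    finally show "\<exists>e\<in>R. (if e < m then v (\<pi> k) e else 0) \<le> C k * V k t" using e by blast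
  qed
  show ?thesis
    apply (rule exI[of _ m'], rule exI[of _ w'], rule exI[of _ V], rule exI[of _ \<pi>], rule exI[of _ C])
    using can pi Cnn Cw bnd unfolding m'_def by auto
qed

theorem theorem3p1:
  fixes \<alpha> :: real
  assumes "\<alpha> \<ge> 1"
    and "\<forall>n m (w :: nat \<Rightarrow> real) (v :: nat \<Rightarrow> nat \<Rightarrow> real). canonical n m w v \<longrightarrow>
           (\<exists>A. is_alpha_wmms n m w v \<alpha> A)"
  shows "\<forall>n m (w :: nat \<Rightarrow> real) (v :: nat \<Rightarrow> nat \<Rightarrow> real). chore_instance n m w v \<longrightarrow>
           (\<exists>A. is_alpha_wmms n m w v (4 * \<alpha>) A)"
proof (intro allI impI)
  fix n m and w :: "nat \<Rightarrow> real" and v :: "nat \<Rightarrow> nat \<Rightarrow> real"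
  assume ci: "chore_instance n m w v"
  from construct[OF ci] obtain m' w' V \<pi> C where
    mm: "m \<le> m'" and can: "canonical n m' w' V" and pi: "bij_betw \<pi> {..<n} {..<n}"
    and CC: "\<forall>k<n. C k \<ge> 0 \<and> C k * w' k = 4 * wmms n m w v (\<pi> k)"
    and bnd: "\<forall>k<n. \<forall>t<m'. \<forall>R\<subseteq>{..<m'}. card R = Suc t \<longrightarrow>
          (\<exists>e\<in>R. (if e < m then v (\<pi> k) e else 0) \<le> C k * V k t)"
    by blast
  from assms(2) can obtain A' where A': "is_alpha_wmms n m' w' V \<alpha> A'" by blast
  have A'a: "allocation n m' A'" using A' unfolding is_alpha_wmms_def by simp
  have A'c: "\<forall>k<n. cost V k (A' k) \<le> \<alpha> * w' k"
    using A' can unfolding is_alpha_wmms_def canonical_def by auto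
  have Cnn: "\<forall>k<n. C k \<ge> 0" using CC by simp
  from conv[OF ci A'a mm pi Cnn bnd] obtain A where
    Aa: "allocation n m A" and Ac: "\<forall>k<n. cost v (\<pi> k) (A (\<pi> k)) \<le> C k * cost V k (A' k)"
    by blast
  have "\<forall>i<n. cost v i (A i) \<le> 4 * \<alpha> * wmms n m w v i"
  proof (intro allI impI)
    fix i assume i: "i < n"
    then obtain k where k: "k < n" "i = \<pi> k" using pi unfolding bij_betw_def by auto
    have "cost v i (A i) \<le> C k * cost V k (A' k)" using Ac k by simp
    also have "\<dots> \<le> C k * (\<alpha> * w' k)" using A'c CC k by (intro mult_left_mono) auto
    also have "\<dots> = \<alpha> * (C k * w' k)" by simp
    also have "\<dots> = 4 * \<alpha> * wmms n m w v i" using CC k by simp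
    finally show "cost v i (A i) \<le> 4 * \<alpha> * wmms n m w v i" .
  qed
  thus "\<exists>A. is_alpha_wmms n m w v (4 * \<alpha>) A" using Aa unfolding is_alpha_wmms_def by blast
qed

end
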